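(* Let $n\ge 3$ and let $k\in[1..n-2]$ be coprime to $n$. Then there are exactly three strings $\mathsf{T}$ of length $n$ over $\{\mathtt{a},\mathtt{b}\}$ ($\mathtt{a}<\mathtt{b}$) whose suffix array $\mathsf{SA}_{\mathsf{T}}=[p_1,\ldots,p_n]$ is an arithmetically progressed permutation with ratio $k$. Each such $\mathsf{T}$ has the form $\mathsf{T}[i]=\mathtt{a}$ if $i\in\{p_1,\ldots,p_s\}$ and $\mathsf{T}[i]=\mathtt{b}$ otherwise, for some $s\in[1..n-1]$ (so $p_s$ is the start of the lexicographically largest suffix beginning with $\mathtt{a}$), and the three strings are determined by: (1) $p_1=n$ and $p_s=n-k-1$; (2) $p_1=k+1$ and $p_s=n-k$; (3) $p_1=1$ and $p_s=n-k$. The strings in cases (1) and (2) have period $n-k$, and the string in case (3) is a Lyndon word.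
   Context: Lexicographic order with a proper prefix smaller than the longer string; suffix array $\mathsf{SA}_{\mathsf{T}}$: permutation of $[1..n]$ such that $\mathsf{T}[\mathsf{SA}_{\mathsf{T}}[i]..n]$ is the $i$-th smallest suffix. $x\bmod n$ denotes the representative of $x$ modulo $n$ in $[1..n]$. An arithmetically progressed permutation of length $n$ with ratio $k\in[1..n-1]$ is a permutation $P=[p_1,\ldots,p_n]$ of $[1..n]$ with $p_{i+1}=p_i+k\bmod n$. A string $\mathsf{T}$ of length $n$ has period $p\in[1..n-1]$ if $\mathsf{T}[i]=\mathsf{T}[i+p]$ for all $i\in[1..n-p]$. A Lyndon word is a string that is strictly smaller in lexicographic order than all its other cyclic rotations. *)

theory Defs
  imports Main
begin

text \<open>Strings over the binary alphabet {a,b} with a < b are modelled as bool lists,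
  letter a = False, letter b = True (False < True in Isabelle).
  Positions are 1-based: T[i] = T ! (i - 1), suffix T[i..n] = drop (i - 1) T.\<close>

type_synonym ab_string = "bool list"

abbreviation letter_a :: bool where "letter_a \<equiv> False"
abbreviation letter_b :: bool where "letter_b \<equiv> True"

definition suf :: "'a list \<Rightarrow> nat \<Rightarrow> 'a list" where
  "suf T i = drop (i - 1) T"

definition is_suffix_array :: "'a::linorder list \<Rightarrow> nat list \<Rightarrow> bool" where
  "is_suffix_array T SA \<longleftrightarrow>
     length SA = length T \<and> distinct SA \<and> set SA = {1..length T} \<and>
     (\<forall>i. i + 1 < length SA \<longrightarrow> ord_class.lexordp (suf T (SA ! i)) (suf T (SA ! (i + 1))))"

definition mod1 :: "nat \<Rightarrow> nat \<Rightarrow> nat" where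
  "mod1 x n = (if x mod n = 0 then n else x mod n)"

definition arith_prog_perm :: "nat \<Rightarrow> nat \<Rightarrow> nat list \<Rightarrow> bool" where
  "arith_prog_perm n k P \<longleftrightarrow>
     1 \<le> k \<and> k \<le> n - 1 \<and>
     length P = n \<and> distinct P \<and> set P = {1..n} \<and>
     (\<forall>i. i + 1 < n \<longrightarrow> P ! (i + 1) = mod1 (P ! i + k) n)"

definition has_period :: "'a list \<Rightarrow> nat \<Rightarrow> bool" where
  "has_period T p \<longleftrightarrow> 1 \<le> p \<and> p \<le> length T - 1 \<and>
     (\<forall>i\<in>{1..length T - p}. T ! (i - 1) = T ! (i + p - 1))"

definition lyndon :: "'a::linorder list \<Rightarrow> bool" where
  "lyndon T \<longleftrightarrow> T \<noteq> [] \<and> (\<forall>j\<in>{1..<length T}. ord_class.lexordp T (rotate j T))"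

definition sa_form :: "nat \<Rightarrow> ab_string \<Rightarrow> nat \<Rightarrow> nat \<Rightarrow> bool" where
  "sa_form n T p1 ps \<longleftrightarrow> (\<exists>P s. is_suffix_array T P \<and> 1 \<le> s \<and> s \<le> n - 1 \<and>
      (\<forall>i\<in>{1..n}. T ! (i - 1) = (if i \<in> set (take s P) then letter_a else letter_b)) \<and>
      P ! 0 = p1 \<and> P ! (s - 1) = ps)"

end

theory Submission
  imports Defs "HOL-Number_Theory.Cong"
begin

lemma suf_Cons: "1 \<le> p \<Longrightarrow> p \<le> length T \<Longrightarrow> suf T p = T!(p-1) # suf T (Suc p)"
  unfolding suf_def using Cons_nth_drop_Suc[of "p-1" T] by simp

lemma suf_end: "suf T (Suc (length T)) = []"
  unfolding suf_def by simp

definition idx :: "nat list \<Rightarrow> nat \<Rightarrow> nat" where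
  "idx P x = (THE a. a < length P \<and> P!a = x)"

lemma idx_nth: "distinct P \<Longrightarrow> a < length P \<Longrightarrow> idx P (P!a) = a"
  unfolding idx_def by (rule the_equality) (auto simp: nth_eq_iff_index_eq)

lemma idx_in: "distinct P \<Longrightarrow> x \<in> set P \<Longrightarrow> idx P x < length P \<and> P!(idx P x) = x"
  by (metis idx_nth in_set_conv_nth)

lemma sa_sorted:
  assumes "is_suffix_array T P" "i < j" "j < length T"
  shows "ord_class.lexordp (suf T (P!i)) (suf T (P!j))"
  using assms(2,3)
proof (induction j)
  case 0 then show ?case by simp
next
  case (Suc j)
  have st: "ord_class.lexordp (suf T (P!j)) (suf T (P!Suc j))"
    using assms(1) Suc.prems unfolding is_suffix_array_def by auto
  show ?case
  proof (cases "i = j")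
    case True then show ?thesis using st by simp
  next
    case False
    then have "ord_class.lexordp (suf T (P!i)) (suf T (P!j))" using Suc by auto
    then show ?thesis using st lexordp_trans by blast
  qed
qed

definition sa_cond :: "'a::linorder list \<Rightarrow> nat list \<Rightarrow> bool" where
  "sa_cond T P \<longleftrightarrow> (\<forall>i. i + 1 < length P \<longrightarrow>
     T!(P!i - 1) < T!(P!(i+1) - 1) \<or>
     (T!(P!i - 1) = T!(P!(i+1) - 1) \<and> (P!i = length T \<or>
       (P!(i+1) \<noteq> length T \<and> idx P (P!i + 1) < idx P (P!(i+1) + 1)))))"

lemma mono_step:
  fixes f :: "nat \<Rightarrow> 'a::order"
  assumes "\<And>l. l + 1 < n \<Longrightarrow> f l \<le> f (l+1)" "i \<le> j" "j < n"
  shows "f i \<le> f j"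
  using assms(2,3)
proof (induction j)
  case 0 then show ?case by simp
next
  case (Suc j)
  show ?case
  proof (cases "i = Suc j")
    case True then show ?thesis by simp
  next
    case False
    then have "f i \<le> f j" using Suc by auto
    also have "f j \<le> f (Suc j)" using assms(1)[of j] Suc.prems by simp
    finally show ?thesis .
  qed
qed

lemma chain_lemma:
  fixes g :: "nat \<Rightarrow> nat"
  assumes "\<And>l. i \<le> l \<Longrightarrow> l < j \<Longrightarrow> A l \<or> (\<not> A (l+1) \<and> g l < g (l+1))"
    and "\<not> A i"
  shows "i < l \<Longrightarrow> l \<le> j \<Longrightarrow> \<not> A l \<and> g i < g l"
proof (induction l)
  case 0 then show ?case by simp
next
  case (Suc l)
  show ?case
  proof (cases "i = l")
    case True then show ?thesis using assms(1)[of l] assms(2) Suc.prems by auto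
  next
    case False
    then have "\<not> A l \<and> g i < g l" using Suc by auto
    then show ?thesis using assms(1)[of l] Suc.prems by auto
  qed
qed

lemma sa_iff_cond:
  fixes T :: "'a::linorder list"
  assumes len: "length T = n" "length P = n" and dist: "distinct P" and setP: "set P = {1..n}"
  shows "is_suffix_array T P \<longleftrightarrow> sa_cond T P"
proof
  assume sa: "is_suffix_array T P"
  show "sa_cond T P"
    unfolding sa_cond_def
  proof (intro allI impI)
    fix i assume i: "i + 1 < length P"
    define p where "p = P!i"
    define q where "q = P!(i+1)"
    have pin: "p \<in> {1..n}" using i setP len unfolding p_def by (metis Suc_eq_plus1 Suc_lessD nth_mem)
    have qin: "q \<in> {1..n}" using i setP len unfolding q_def by (metis nth_mem)
    have pq: "p \<noteq> q" using dist i unfolding p_def q_def by (simp add: nth_eq_iff_index_eq)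
    have "ord_class.lexordp (suf T p) (suf T q)" using sa i unfolding is_suffix_array_def p_def q_def by simp
    then have lx: "ord_class.lexordp (T!(p-1) # suf T (Suc p)) (T!(q-1) # suf T (Suc q))"
      using suf_Cons[of p T] suf_Cons[of q T] pin qin len by simp
    show "T!(P!i - 1) < T!(P!(i+1) - 1) \<or>
     (T!(P!i - 1) = T!(P!(i+1) - 1) \<and> (P!i = length T \<or>
       (P!(i+1) \<noteq> length T \<and> idx P (P!i + 1) < idx P (P!(i+1) + 1))))"
    proof (cases "T!(p-1) < T!(q-1)")
      case True then show ?thesis unfolding p_def q_def by simp
    next
      case False
      with lx have eq: "T!(p-1) = T!(q-1)" and lx2: "ord_class.lexordp (suf T (Suc p)) (suf T (Suc q))"
        by auto
      have qn: "q \<noteq> n" using lx2 suf_end[of T] len by auto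
      have "p = n \<or> idx P (p + 1) < idx P (q + 1)"
      proof (rule ccontr)
        assume "\<not> (p = n \<or> idx P (p + 1) < idx P (q + 1))"
        then have pn: "p \<noteq> n" and le: "idx P (q+1) \<le> idx P (p+1)" by auto
        have p1: "p + 1 \<in> set P" using pin pn setP by auto
        have q1: "q + 1 \<in> set P" using qin qn setP by auto
        note a = idx_in[OF dist p1] and b = idx_in[OF dist q1]
        show False
        proof (cases "idx P (q+1) = idx P (p+1)")
          case True then show False using a b pq by auto
        next
          case False
          then have "idx P (q+1) < idx P (p+1)" using le by simp
          then have "ord_class.lexordp (suf T (q+1)) (suf T (p+1))"
            using sa_sorted[OF sa] a b len by metis
          then show False using lx2 lexordp_trans lexordp_irreflexive' by fastforce
        qed
      qed
      then show ?thesis using eq qn len unfolding p_def q_def by auto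
    qed
  qed
next
  assume c: "sa_cond T P"
  define f where "f l = T!(P!l - 1)" for l
  have cc: "T!(P!i - 1) < T!(P!(i+1) - 1) \<or>
     (T!(P!i - 1) = T!(P!(i+1) - 1) \<and> (P!i = n \<or>
       (P!(i+1) \<noteq> n \<and> idx P (P!i + 1) < idx P (P!(i+1) + 1))))" if "i + 1 < n" for i
    using c that len unfolding sa_cond_def by simp
  have fstep: "f l \<le> f (l+1)" if "l + 1 < n" for l
    using cc[OF that] unfolding f_def by auto
  have Pin: "P!l \<in> {1..n}" if "l < n" for l using that setP len by (metis nth_mem)
  have main: "\<forall>i j. i < j \<and> j < n \<and> (n - P!i) + (n - P!j) = m \<longrightarrow>
      ord_class.lexordp (suf T (P!i)) (suf T (P!j))" for m
  proof (induction m rule: less_induct)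
    case (less m)
    show ?case
    proof (intro allI impI)
      fix i j assume ij: "i < j \<and> j < n \<and> (n - P!i) + (n - P!j) = m"
      have pin: "P!i \<in> {1..n}" and qin: "P!j \<in> {1..n}" using ij Pin by auto
      have sp: "suf T (P!i) = f i # suf T (Suc (P!i))" using suf_Cons[of "P!i" T] pin len f_def by simp
      have sq: "suf T (P!j) = f j # suf T (Suc (P!j))" using suf_Cons[of "P!j" T] qin len f_def by simp
      have fij: "f i \<le> f j" using mono_step[of n f i j] fstep ij by auto
      show "ord_class.lexordp (suf T (P!i)) (suf T (P!j))"
      proof (cases "f i < f j")
        case True then show ?thesis using sp sq by simp
      next
        case False
        then have eq: "f i = f j" using fij by simp
        have feq: "f l = f (l+1)" if "i \<le> l" "l < j" for l
        proof -
          have "f i \<le> f l" using mono_step[of n f i l] fstep that ij by auto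
          moreover have "f (l+1) \<le> f j" using mono_step[of n f "l+1" j] fstep that ij by auto
          moreover have "f l \<le> f (l+1)" using fstep that ij by auto
          ultimately show ?thesis using eq by auto
        qed
        have step: "P!l = n \<or> (P!(l+1) \<noteq> n \<and> idx P (P!l + 1) < idx P (P!(l+1) + 1))"
          if "i \<le> l" "l < j" for l
        proof -
          have "l + 1 < n" using that ij by simp
          from cc[OF this] feq[OF that] show ?thesis unfolding f_def by auto
        qed
        have qn: "P!j \<noteq> n"
        proof -
          have "P!(j-1) = n \<or> P!j \<noteq> n" using step[of "j-1"] ij by (cases "i \<le> j - 1") auto
          moreover have "P!(j-1) \<noteq> P!j" proof -
            have "j-1 < length P" "j - 1 \<noteq> j" "j < length P" using ij len by auto
            then show ?thesis by (simp add: nth_eq_iff_index_eq[OF dist])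
          qed
          ultimately show ?thesis by auto
        qed
        show ?thesis
        proof (cases "P!i = n")
          case True
          have "suf T (Suc (P!i)) = []" using True suf_end[of T] len by simp
          moreover have "suf T (Suc (P!j)) \<noteq> []" using qin qn len unfolding suf_def by auto
          ultimately show ?thesis using sp sq eq by simp
        next
          case False
          have ch: "P!j \<noteq> n \<and> idx P (P!i + 1) < idx P (P!j + 1)"
            using chain_lemma[of i j "\<lambda>l. P!l = n" "\<lambda>l. idx P (P!l + 1)" j] step False ij by auto
          have p1: "P!i + 1 \<in> set P" using pin False setP by auto
          have q1: "P!j + 1 \<in> set P" using qin qn setP by auto
          note a = idx_in[OF dist p1] and b = idx_in[OF dist q1]
          define m' where "m' = (n - P!(idx P (P!i + 1))) + (n - P!(idx P (P!j + 1)))"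
          have "m' < m"
            using a b ij pin qin False qn unfolding m'_def by auto
          note IH = less.IH[OF this, rule_format, of "idx P (P!i + 1)" "idx P (P!j + 1)"]
          have "ord_class.lexordp (suf T (P!(idx P (P!i + 1)))) (suf T (P!(idx P (P!j + 1))))"
            using IH ch b len unfolding m'_def by simp
          then have "ord_class.lexordp (suf T (Suc (P!i))) (suf T (Suc (P!j)))" using a b by simp
          then show ?thesis using sp sq eq by simp
        qed
      qed
    qed
  qed
  show "is_suffix_array T P"
    unfolding is_suffix_array_def using len dist setP main by auto
qed

lemma mod1_range: "0 < n \<Longrightarrow> 1 \<le> mod1 x n \<and> mod1 x n \<le> n"
  unfolding mod1_def by auto

lemma mod1_mod: "mod1 x n mod n = x mod n"
  unfolding mod1_def by auto

lemma mod1_cong: "x mod n = y mod n \<Longrightarrow> mod1 x n = mod1 y n"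
  unfolding mod1_def by auto

lemma mod1_add: "mod1 (mod1 x n + y) n = mod1 (x + y) n"
  by (rule mod1_cong) (metis mod1_mod mod_add_left_eq)

lemma mod1_id: "1 \<le> x \<Longrightarrow> x \<le> n \<Longrightarrow> mod1 x n = x"
  unfolding mod1_def by (cases "x = n") auto

lemma mod1_suc: "0 < n \<Longrightarrow> mod1 x n \<noteq> n \<Longrightarrow> mod1 (x + 1) n = mod1 x n + 1"
proof -
  assume n: "0 < n" and h: "mod1 x n \<noteq> n"
  have "mod1 (x + 1) n = mod1 (mod1 x n + 1) n" by (rule mod1_add[symmetric])
  also have "\<dots> = mod1 x n + 1" using mod1_range[OF n, of x] h by (intro mod1_id) auto
  finally show ?thesis .
qed

lemma mod1_inv:
  assumes "1 \<le> x" "x \<le> n" "1 \<le> k" "k < n" "mod1 (x + k) n = y"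
  shows "x = (if k < y then y - k else y + n - k)"
proof (cases "x + k \<le> n")
  case True
  then have "y = x + k" using assms mod1_id[of "x+k" n] by auto
  then show ?thesis using assms by auto
next
  case False
  have "mod1 (x + k) n = mod1 (x + k - n) n"
    by (rule mod1_cong) (use False in \<open>simp add: le_mod_geq\<close>)
  also have "\<dots> = x + k - n" using False assms by (intro mod1_id) auto
  finally have "y = x + k - n" using assms by simp
  then show ?thesis using assms False by auto
qed

locale APctx =
  fixes n k :: nat and P :: "nat list"
  assumes ap: "arith_prog_perm n k P" and n3: "3 \<le> n" and kb: "k \<le> n - 2"
begin

lemma len: "length P = n" and dist: "distinct P" and setP: "set P = {1..n}"
  and k1: "1 \<le> k" and stp: "\<And>i. i + 1 < n \<Longrightarrow> P!(i+1) = mod1 (P!i + k) n"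
  using ap unfolding arith_prog_perm_def by auto

lemma Pin: "i < n \<Longrightarrow> P!i \<in> {1..n}"
  using setP len by (metis nth_mem)

lemma Pnth: "i < n \<Longrightarrow> P!i = mod1 (P!0 + i*k) n"
proof (induction i)
  case 0 then show ?case using Pin[of 0] by (simp add: mod1_id)
next
  case (Suc i)
  then have "P!(Suc i) = mod1 (mod1 (P!0 + i*k) n + k) n" using stp[of i] by simp
  also have "\<dots> = mod1 (P!0 + i * k + k) n" by (rule mod1_add)
  also have "\<dots> = mod1 (P!0 + Suc i * k) n" by (simp add: algebra_simps)
  finally show ?case .
qed

lemma wrap: "mod1 (P!(n-1) + k) n = P!0"
proof -
  have "mod1 (P!(n-1) + k) n = mod1 (P!0 + (n-1)*k + k) n"
    using Pnth[of "n-1"] n3 by (simp add: mod1_add)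
  also have "\<dots> = mod1 (P!0 + n*k) n"
  proof -
    have "(n-1)*k + k = n*k" using n3 by (cases n) auto
    then show ?thesis by (simp add: add.assoc)
  qed
  also have "\<dots> = mod1 (P!0) n" by (rule mod1_cong) simp
  also have "\<dots> = P!0" using Pin[of 0] n3 by (simp add: mod1_id)
  finally show ?thesis .
qed

lemma last_val: "P!(n-1) = (if k < P!0 then P!0 - k else P!0 + n - k)"
  using mod1_inv[of "P!(n-1)" n k "P!0"] Pin[of "n-1"] n3 kb k1 wrap by auto

definition ix :: "nat \<Rightarrow> nat" where "ix x = (THE a. a < n \<and> P!a = x)"

lemma ix_nth: "a < n \<Longrightarrow> ix (P!a) = a"
  unfolding ix_def by (rule the_equality) (use dist len in \<open>auto simp: nth_eq_iff_index_eq\<close>)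

lemma ix_in: "x \<in> {1..n} \<Longrightarrow> ix x < n \<and> P!(ix x) = x"
  by (metis setP len ix_nth in_set_conv_nth)

lemma Peq: "a < n \<Longrightarrow> b < n \<Longrightarrow> P!a = P!b \<longleftrightarrow> a = b"
  using dist len by (simp add: nth_eq_iff_index_eq)

lemma ix_succ: "x \<in> {1..n} \<Longrightarrow> ix x + 1 < n \<Longrightarrow> ix (mod1 (x + k) n) = ix x + 1"
  using stp[of "ix x"] ix_in[of x] ix_nth[of "ix x + 1"] by simp

lemma ix_wrap: "x \<in> {1..n} \<Longrightarrow> ix x = n - 1 \<Longrightarrow> mod1 (x + k) n = P!0"
  using ix_in[of x] wrap by metis

end

context APctx begin

lemma idx_ix: "idx P x = ix x" unfolding idx_def ix_def using len by simp

definition lett :: "bool list \<Rightarrow> nat \<Rightarrow> bool" where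
  "lett T s \<longleftrightarrow> (\<forall>i<n. T!(P!i - 1) = (s \<le> i))"

definition C :: "nat \<Rightarrow> bool" where
  "C s \<longleftrightarrow> (\<forall>i. i+1<n \<longrightarrow> i+1 = s \<or> P!i = n \<or> (P!(i+1) \<noteq> n \<and> P!i + 1 \<noteq> P!(n-1)))"

lemma key:
  assumes "i+1<n" "P!i \<noteq> n" "P!(i+1) \<noteq> n"
  shows "ix (P!i+1) < ix (P!(i+1)+1) \<longleftrightarrow> P!i + 1 \<noteq> P!(n-1)"
proof -
  have x: "P!i + 1 \<in> {1..n}" using Pin[of i] assms by auto
  have "mod1 (P!i + k + 1) n = mod1 (P!i + k) n + 1"
    using stp[of i] assms n3 by (intro mod1_suc) auto
  then have e: "mod1 (P!i + 1 + k) n = P!(i+1) + 1"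
    using stp[of i] assms by (simp add: algebra_simps)
  obtain a where a: "a = ix (P!i+1)" "a < n" "P!a = P!i + 1" using ix_in[OF x] by auto
  show ?thesis
  proof (cases "a + 1 < n")
    case True
    have "ix (P!(i+1)+1) = a + 1" using ix_succ[OF x] a True e by simp
    moreover have "P!i + 1 \<noteq> P!(n-1)" using a True Peq[of a "n-1"] by auto
    ultimately show ?thesis using a by simp
  next
    case False
    then have an: "a = n-1" using a by simp
    then have "mod1 (P!i+1+k) n = P!0" using ix_wrap[OF x] a by simp
    then have "ix (P!(i+1)+1) = 0" using e ix_nth[of 0] n3 by simp
    then show ?thesis using a an n3 by auto
  qed
qed

lemma cond_iff:
  assumes "length T = n" "lett T s"
  shows "sa_cond T P \<longleftrightarrow> C s"
proof -
  have L: "T!(P!i - 1) = (s \<le> i)" if "i < n" for i using assms that unfolding lett_def by auto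
  have E: "(T!(P!i - 1) < T!(P!(i+1) - 1) \<or>
     (T!(P!i - 1) = T!(P!(i+1) - 1) \<and> (P!i = length T \<or>
       (P!(i+1) \<noteq> length T \<and> idx P (P!i + 1) < idx P (P!(i+1) + 1)))))
     \<longleftrightarrow> (i+1 = s \<or> P!i = n \<or> (P!(i+1) \<noteq> n \<and> P!i + 1 \<noteq> P!(n-1)))" if i: "i+1<n" for i
  proof -
    have l1: "T!(P!i - 1) = (s \<le> i)" and l2: "T!(P!(i+1) - 1) = (s \<le> i+1)" using L i by auto
    show ?thesis
    proof (cases "P!i = n \<or> P!(i+1) = n")
      case True then show ?thesis using l1 l2 assms(1) by (auto simp: less_bool_def)
    next
      case False
      then show ?thesis using l1 l2 assms(1) key[OF i] idx_ix by (auto simp: less_bool_def)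
    qed
  qed
  show ?thesis unfolding sa_cond_def C_def using E len by auto
qed

lemma Ci: "C s \<Longrightarrow> i+1<n \<Longrightarrow> i+1 = s \<or> P!i = n \<or> (P!(i+1) \<noteq> n \<and> P!i + 1 \<noteq> P!(n-1))"
  unfolding C_def by blast

lemma C_unique:
  assumes Cs: "C s"
  shows "(P!0 = n \<and> s = ix (n-k-1) + 1) \<or> (P!0 = k+1 \<and> s = ix n) \<or> (P!0 = 1 \<and> s = ix n)"
proof (cases "P!0 = n")
  case True
  have lv: "P!(n-1) = n - k" using last_val True k1 kb n3 by simp
  have x: "n-k-1 \<in> {1..n}" using kb k1 n3 by auto
  obtain i0 where i0: "i0 = ix (n-k-1)" "i0 < n" "P!i0 = n-k-1" using ix_in[OF x] by auto
  have "i0 \<noteq> n-1" using i0 lv kb n3 by auto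
  then have i1: "i0+1 < n" using i0 by simp
  have "i0 + 1 = s" using Ci[OF Cs i1] i0 lv kb n3 by auto
  then show ?thesis using True i0 by simp
next
  case False
  have nin: "n \<in> {1..n}" using n3 by auto
  obtain r where r: "r = ix n" "r < n" "P!r = n" using ix_in[OF nin] by auto
  have r0: "r \<noteq> 0"
  proof
    assume "r = 0" then show False using r False by simp
  qed
  have "P!(r-1) \<noteq> n" using r r0 Peq[of "r-1" r] by auto
  then have sr: "s = r" using Ci[OF Cs, of "r-1"] r r0 by auto
  show ?thesis
  proof (cases "P!0 = k+1 \<or> P!0 = 1")
    case True then show ?thesis using sr r by auto
  next
    case nk: False
    define y where "y = P!(n-1)"
    have y2: "2 \<le> y" using last_val nk Pin[of 0] kb n3 unfolding y_def by auto
    have yn: "y \<le> n" using Pin[of "n-1"] n3 unfolding y_def by auto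
    have x: "y - 1 \<in> {1..n}" using y2 yn by auto
    obtain i0 where i0: "i0 = ix (y-1)" "i0 < n" "P!i0 = y-1" using ix_in[OF x] by auto
    have "i0 \<noteq> n-1" using i0 y2 unfolding y_def by auto
    then have i1: "i0+1 < n" using i0 by simp
    have "i0 + 1 = s" using Ci[OF Cs i1] i0 y2 yn unfolding y_def by auto
    then have pn: "P!(i0+1) = n" using sr r by simp
    have "P!(i0+1) = mod1 (y - 1 + k) n" using stp[OF i1] i0 by simp
    then have m: "mod1 (y - 1 + k) n = n" using pn by simp
    have "mod1 (y + k) n = mod1 (mod1 (y - 1 + k) n + 1) n"
      using mod1_add[of "y-1+k" n 1] y2 by simp
    also have "\<dots> = mod1 1 n" using m n3 by (intro mod1_cong) (simp add: mod_Suc)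
    also have "\<dots> = 1" using n3 by (simp add: mod1_id)
    finally have "P!0 = 1" using wrap unfolding y_def by simp
    then show ?thesis using nk by simp
  qed
qed

lemma C_exist1:
  assumes "P!0 = n" shows "C (ix (n-k-1) + 1)"
  unfolding C_def
proof (intro allI impI)
  fix i assume i: "i + 1 < n"
  have lv: "P!(n-1) = n - k" using last_val assms k1 kb n3 by simp
  have x: "n-k-1 \<in> {1..n}" using kb k1 n3 by auto
  obtain i0 where i0: "i0 = ix (n-k-1)" "i0 < n" "P!i0 = n-k-1" using ix_in[OF x] by auto
  have a: "P!(i+1) \<noteq> n" using Peq[of "i+1" 0] assms i by auto
  have b: "P!i + 1 = n - k \<Longrightarrow> i = i0" using Peq[of i i0] i0 i by auto
  show "i + 1 = ix (n - k - 1) + 1 \<or> P ! i = n \<or> P ! (i + 1) \<noteq> n \<and> P ! i + 1 \<noteq> P ! (n - 1)"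
    using a b lv i0 by auto
qed

lemma C_exist23:
  assumes "P!0 = k+1 \<or> P!0 = 1" shows "C (ix n)"
  unfolding C_def
proof (intro allI impI)
  fix i assume i: "i + 1 < n"
  have a: "P!(i+1) = n \<Longrightarrow> ix n = i + 1" using ix_nth[of "i+1"] i by auto
  have b: "P!i + 1 \<noteq> P!(n-1) \<or> P!(i+1) = n"
  proof (cases "P!0 = k+1")
    case True
    then have "P!(n-1) = 1" using last_val by simp
    then show ?thesis using Pin[of i] i by auto
  next
    case False
    then have p1: "P!0 = 1" using assms by simp
    then have lv: "P!(n-1) = n + 1 - k" using last_val k1 by simp
    have "P!i + 1 = P!(n-1) \<Longrightarrow> P!(i+1) = n"
    proof -
      assume "P!i + 1 = P!(n-1)"
      then have "P!i = n - k" using lv kb n3 by simp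
      then have "P!(i+1) = mod1 n n" using stp[OF i] kb n3 by simp
      then show ?thesis using n3 by (simp add: mod1_id)
    qed
    then show ?thesis by blast
  qed
  show "i + 1 = ix n \<or> P ! i = n \<or> P ! (i + 1) \<noteq> n \<and> P ! i + 1 \<noteq> P ! (n - 1)"
    using a b by auto
qed

end

lemma ap_exists:
  assumes n3: "3 \<le> n" and k1: "1 \<le> k" and kb: "k \<le> n - 2" and cop: "coprime k n"
    and p: "p \<in> {1..n}"
  shows "\<exists>P. arith_prog_perm n k P \<and> P!0 = p"
proof -
  define P where "P = map (\<lambda>i. mod1 (p + i*k) n) [0..<n]"
  have len: "length P = n" unfolding P_def by simp
  have nth: "i < n \<Longrightarrow> P!i = mod1 (p + i*k) n" for i unfolding P_def by simp
  have P0: "P!0 = p" using nth[of 0] n3 p by (simp add: mod1_id)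
  have stp: "P!(i+1) = mod1 (P!i + k) n" if "i + 1 < n" for i
  proof -
    have "P!(i+1) = mod1 (p + i*k + k) n" using nth[of "i+1"] that by (simp add: algebra_simps)
    also have "\<dots> = mod1 (mod1 (p + i*k) n + k) n" by (rule mod1_add[symmetric])
    finally show ?thesis using nth[of i] that by simp
  qed
  have dist: "distinct P"
    unfolding distinct_conv_nth
  proof (intro allI impI)
    fix i j assume ij: "i < length P" "j < length P" "i \<noteq> j"
    show "P!i \<noteq> P!j"
    proof
      assume "P!i = P!j"
      then have "mod1 (p + i*k) n = mod1 (p + j*k) n" using nth ij len by simp
      then have "(p + i*k) mod n = (p + j*k) mod n" by (metis mod1_mod)
      then have "[p + i*k = p + j*k] (mod n)" by (simp add: cong_def)
      then have "[i*k = j*k] (mod n)" by (simp add: cong_add_lcancel_nat)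
      then have "[i = j] (mod n)" using cong_mult_rcancel_nat[OF cop] by simp
      then have "i = j" using cong_less_modulus_unique_nat ij len by simp
      then show False using ij by simp
    qed
  qed
  have sub: "set P \<subseteq> {1..n}" using mod1_range[of n] n3 unfolding P_def by auto
  have "card (set P) = n" using distinct_card[OF dist] len by simp
  then have setP: "set P = {1..n}" using card_subset_eq[OF _ sub] by simp
  show ?thesis unfolding arith_prog_perm_def using len dist setP stp P0 k1 kb by (intro exI[of _ P]) auto
qed

lemma lex_app: "ord_class.lexordp xs ys \<Longrightarrow> length ys < length (xs::'a::linorder list) \<Longrightarrow> ord_class.lexordp xs (ys @ zs)"
proof -
  assume a: "ord_class.lexordp xs ys" "length ys < length xs"
  then obtain us x y vs ws where "x < y" "xs = us @ x # vs" "ys = us @ y # ws"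
    unfolding lexordp_iff by auto
  then show ?thesis by (simp add: lexordp_append_left_rightI)
qed


lemma mono_bool:
  fixes f :: "nat \<Rightarrow> bool"
  assumes "\<And>l. l + 1 < n \<Longrightarrow> f l \<le> f (l+1)"
  shows "\<exists>s. \<forall>i<n. f i = (s \<le> i)"
  using assms
proof (induction n)
  case 0 then show ?case by simp
next
  case (Suc n)
  then obtain s where s: "\<forall>i<n. f i = (s \<le> i)" by auto
  show ?case
  proof (cases "f n")
    case True
    then show ?thesis using s by (intro exI[of _ "min s n"]) (auto simp: less_Suc_eq)
  next
    case False
    have "\<not> f i" if "i \<le> n" for i
      using mono_step[of "Suc n" f i n] Suc.prems that False by auto
    then show ?thesis by (intro exI[of _ "Suc n"]) auto
  qed
qed

definition mkT :: "nat \<Rightarrow> nat list \<Rightarrow> nat \<Rightarrow> bool list" where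
  "mkT n P s = map (\<lambda>j. j \<notin> set (take s P)) [1..<n+1]"

lemma mkT_len: "length (mkT n P s) = n" unfolding mkT_def by simp

lemma mkT_nth: "i \<in> {1..n} \<Longrightarrow> mkT n P s ! (i - 1) = (i \<notin> set (take s P))"
proof -
  assume i: "i \<in> {1..n}"
  then have "[1..<n+1] ! (i - 1) = i" by (simp del: upt_Suc)
  moreover have "i - 1 < n" using i by auto
  then have "i - 1 < length [1..<n+1]" by (simp del: upt_Suc)
  ultimately show ?thesis unfolding mkT_def using nth_map[of "i - 1" "[1..<n+1]"] by (simp del: upt_Suc)
qed

lemma ap_eq: "arith_prog_perm n k P \<Longrightarrow> arith_prog_perm n k Q \<Longrightarrow> 3 \<le> n \<Longrightarrow> k \<le> n - 2
  \<Longrightarrow> P!0 = Q!0 \<Longrightarrow> P = Q"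
proof -
  assume a: "arith_prog_perm n k P" "arith_prog_perm n k Q" "3 \<le> n" "k \<le> n - 2" "P!0 = Q!0"
  interpret p: APctx n k P by (rule APctx.intro) (use a in auto)
  interpret q: APctx n k Q by (rule APctx.intro) (use a in auto)
  show "P = Q"
  proof (rule nth_equalityI)
    show "length P = length Q" using p.len q.len by simp
    fix i assume "i < length P"
    then have i: "i < n" using p.len by simp
    show "P!i = Q!i" using p.Pnth[OF i] q.Pnth[OF i] a(5) by simp
  qed
qed

context APctx begin

lemma take_mem: "i < n \<Longrightarrow> (P!i \<in> set (take s P)) = (i < s)"
proof
  assume "i < n" "P!i \<in> set (take s P)"
  then obtain j where j: "j < length (take s P)" "take s P ! j = P!i" by (metis in_set_conv_nth)
  then have "P!j = P!i" "j < n" "j < s" using len by auto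
  then show "i < s" using Peq `i < n` by auto
next
  assume "i < n" "i < s"
  then have "take s P ! i = P!i" "i < length (take s P)" using len by auto
  then show "P!i \<in> set (take s P)" by (metis nth_mem)
qed

lemma lett_mkT: "lett (mkT n P s) s"
  unfolding lett_def
proof (intro allI impI)
  fix i assume i: "i < n"
  have "mkT n P s ! (P!i - 1) = (P!i \<notin> set (take s P))" by (rule mkT_nth[OF Pin[OF i]])
  then show "mkT n P s ! (P!i - 1) = (s \<le> i)" using take_mem[OF i, of s] by (simp add: not_less)
qed

lemma sa_mkT: "C s \<Longrightarrow> is_suffix_array (mkT n P s) P"
  using sa_iff_cond[OF mkT_len len dist setP] cond_iff[OF mkT_len lett_mkT] by simp

lemma from_sa:
  assumes T: "length T = n" "is_suffix_array T P"
  shows "\<exists>s. C s \<and> T = mkT n P s"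
proof -
  have sc: "sa_cond T P" using sa_iff_cond[OF T(1) len dist setP] T(2) by simp
  define f where "f i = T!(P!i - 1)" for i
  have "f l \<le> f (l+1)" if "l + 1 < n" for l
    using sc that len T(1) unfolding sa_cond_def f_def by (auto simp: less_imp_le)
  then obtain s where s: "\<forall>i<n. f i = (s \<le> i)" using mono_bool by blast
  have lt: "lett T s" unfolding lett_def using s f_def by simp
  have Cs: "C s" using cond_iff[OF T(1) lt] sc by simp
  have "T = mkT n P s"
  proof (rule nth_equalityI)
    show "length T = length (mkT n P s)" using T mkT_len by simp
    fix j assume j: "j < length T"
    have x: "j + 1 \<in> {1..n}" using j T by auto
    note ii = ix_in[OF x]
    have "T!j = f (ix (j+1))" using ii unfolding f_def by simp
    also have "\<dots> = (s \<le> ix (j+1))" using s ii by simp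
    also have "\<dots> = (P!(ix (j+1)) \<notin> set (take s P))" using take_mem[of "ix (j+1)" s] ii by auto
    also have "\<dots> = mkT n P s ! j" using mkT_nth[OF x] ii by simp
    finally show "T!j = mkT n P s ! j" .
  qed
  then show ?thesis using Cs by blast
qed

lemma mkT_at: "i < n \<Longrightarrow> mkT n P s ! (P!i - 1) = (s \<le> i)"
  using lett_mkT unfolding lett_def by blast

lemma period:
  assumes "s < n" "k < P!0" "k < P!s"
  shows "has_period (mkT n P s) (n - k)"
  unfolding has_period_def mkT_len
proof (intro conjI ballI)
  show "1 \<le> n - k" "n - k \<le> n - 1" using kb k1 n3 by auto
  fix i assume i: "i \<in> {1..n - (n - k)}"
  then have i1: "1 \<le> i" "i \<le> k" using kb by auto
  define x where "x = i + (n - k)"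
  have x: "x \<in> {1..n}" using i1 kb unfolding x_def by auto
  have m: "mod1 (x + k) n = i"
  proof -
    have "mod1 (x + k) n = mod1 i n" using kb i1 unfolding x_def by (intro mod1_cong) auto
    then show ?thesis using i1 kb by (simp add: mod1_id)
  qed
  note jj = ix_in[OF x]
  have "ix x \<noteq> n - 1"
  proof
    assume "ix x = n - 1"
    then have "i = P!0" using ix_wrap[OF x] m by simp
    then show False using assms i1 by simp
  qed
  then have j1: "ix x + 1 < n" using jj by arith
  have ixi: "ix i = ix x + 1" using ix_succ[OF x j1] m by simp
  have Pi: "P!(ix x + 1) = i" using ix_in[of i] ixi i1 kb by auto
  have "s \<noteq> ix x + 1" using Pi assms i1 by auto
  moreover have "mkT n P s ! (x - 1) = (s \<le> ix x)" using mkT_at[of "ix x"] jj by simp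
  moreover have "mkT n P s ! (i - 1) = (s \<le> ix x + 1)" using mkT_at[of "ix x + 1"] Pi j1 by simp
  ultimately show "mkT n P s ! (i - 1) = mkT n P s ! (i + (n - k) - 1)" unfolding x_def by auto
qed

lemma case1_props:
  assumes "P!0 = n"
  shows "ix (n-k-1) + 1 < n \<and> P!(ix (n-k-1)) = n-k-1 \<and> P!(ix (n-k-1) + 1) = n - 1"
proof -
  have lv: "P!(n-1) = n - k" using last_val assms k1 kb n3 by simp
  have x: "n-k-1 \<in> {1..n}" using kb k1 n3 by auto
  note i0 = ix_in[OF x]
  have "ix (n-k-1) \<noteq> n-1" using i0 lv kb n3 by auto
  then have i1: "ix (n-k-1) + 1 < n" using i0 by arith
  have "P!(ix (n-k-1) + 1) = mod1 (n - k - 1 + k) n" using stp[OF i1] i0 by simp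
  also have "\<dots> = n - 1" using kb n3 by (simp add: mod1_id)
  finally show ?thesis using i1 i0 by simp
qed

lemma case23_props:
  assumes "P!0 \<noteq> n"
  shows "1 \<le> ix n \<and> ix n < n \<and> P!(ix n) = n \<and> P!(ix n - 1) = n - k"
proof -
  have nin: "n \<in> {1..n}" using n3 by auto
  note r = ix_in[OF nin]
  have r0: "ix n \<noteq> 0"
  proof
    assume "ix n = 0" then show False using r assms by simp
  qed
  have "mod1 (P!(ix n - 1) + k) n = n" using stp[of "ix n - 1"] r r0 by simp
  then have "P!(ix n - 1) = n - k"
    using mod1_inv[of "P!(ix n - 1)" n k n] Pin[of "ix n - 1"] r k1 kb n3 by auto
  then show ?thesis using r r0 by auto
qed

end

theorem theorem10:
  fixes n k :: nat
  assumes "n \<ge> 3" and "1 \<le> k" and "k \<le> n - 2" and "coprime k n"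
  shows "\<exists>T1 T2 T3 :: ab_string.
    distinct [T1, T2, T3] \<and>
    {T :: ab_string. length T = n \<and> (\<exists>P. is_suffix_array T P \<and> arith_prog_perm n k P)}
      = {T1, T2, T3} \<and>
    sa_form n T1 n (n - k - 1) \<and>
    sa_form n T2 (k + 1) (n - k) \<and>
    sa_form n T3 1 (n - k) \<and>
    has_period T1 (n - k) \<and> has_period T2 (n - k) \<and> lyndon T3"
proof -
  note n3 = assms(1) and k1 = assms(2) and kb = assms(3)
  obtain Q1 where Q1: "arith_prog_perm n k Q1" "Q1!0 = n"
    using ap_exists[OF assms(1,2,3,4), of n] n3 by auto
  have "k + 1 \<in> {1..n}" using kb n3 by auto
  then obtain Q2 where Q2: "arith_prog_perm n k Q2" "Q2!0 = k + 1"
    using ap_exists[OF assms(1,2,3,4), of "k+1"] by blast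
  obtain Q3 where Q3: "arith_prog_perm n k Q3" "Q3!0 = 1"
    using ap_exists[OF assms(1,2,3,4), of 1] n3 by auto
  interpret A1: APctx n k Q1 by (rule APctx.intro) (use Q1 assms in auto)
  interpret A2: APctx n k Q2 by (rule APctx.intro) (use Q2 assms in auto)
  interpret A3: APctx n k Q3 by (rule APctx.intro) (use Q3 assms in auto)
  define s1 where "s1 = A1.ix (n-k-1) + 1"
  define s2 where "s2 = A2.ix n"
  define s3 where "s3 = A3.ix n"
  define T1 where "T1 = mkT n Q1 s1"
  define T2 where "T2 = mkT n Q2 s2"
  define T3 where "T3 = mkT n Q3 s3"
  have C1: "A1.C s1" using A1.C_exist1 Q1 unfolding s1_def by simp
  have C2: "A2.C s2" using A2.C_exist23 Q2 unfolding s2_def by simp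
  have C3: "A3.C s3" using A3.C_exist23 Q3 unfolding s3_def by simp
  have SA1: "is_suffix_array T1 Q1" using A1.sa_mkT[OF C1] unfolding T1_def .
  have SA2: "is_suffix_array T2 Q2" using A2.sa_mkT[OF C2] unfolding T2_def .
  have SA3: "is_suffix_array T3 Q3" using A3.sa_mkT[OF C3] unfolding T3_def .
  have c1: "s1 < n \<and> Q1!(s1 - 1) = n-k-1 \<and> Q1!s1 = n - 1"
    using A1.case1_props[OF Q1(2)] unfolding s1_def by simp
  have c2: "1 \<le> s2 \<and> s2 < n \<and> Q2!s2 = n \<and> Q2!(s2 - 1) = n - k"
    using A2.case23_props Q2 kb n3 unfolding s2_def by simp
  have c3: "1 \<le> s3 \<and> s3 < n \<and> Q3!s3 = n \<and> Q3!(s3 - 1) = n - k"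
    using A3.case23_props Q3 n3 unfolding s3_def by simp
  have len1: "length T1 = n" and len2: "length T2 = n" and len3: "length T3 = n"
    unfolding T1_def T2_def T3_def by (simp_all add: mkT_len)
  have seteq: "{T :: ab_string. length T = n \<and> (\<exists>P. is_suffix_array T P \<and> arith_prog_perm n k P)}
      = {T1, T2, T3}"
  proof (intro equalityI subsetI)
    fix T assume "T \<in> {T :: ab_string. length T = n \<and> (\<exists>P. is_suffix_array T P \<and> arith_prog_perm n k P)}"
    then obtain P where T: "length T = n" "is_suffix_array T P" "arith_prog_perm n k P" by auto
    interpret A: APctx n k P by (rule APctx.intro) (use T assms in auto)
    obtain s where s: "A.C s" "T = mkT n P s" using A.from_sa T by blast
    from A.C_unique[OF s(1)]
    show "T \<in> {T1, T2, T3}"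
    proof (elim disjE)
      assume h: "P!0 = n \<and> s = A.ix (n-k-1) + 1"
      then have "P = Q1" using ap_eq[OF T(3) Q1(1) n3 kb] Q1 by simp
      then show ?thesis using s h unfolding T1_def s1_def by simp
    next
      assume h: "P!0 = k+1 \<and> s = A.ix n"
      then have "P = Q2" using ap_eq[OF T(3) Q2(1) n3 kb] Q2 by simp
      then show ?thesis using s h unfolding T2_def s2_def by simp
    next
      assume h: "P!0 = 1 \<and> s = A.ix n"
      then have "P = Q3" using ap_eq[OF T(3) Q3(1) n3 kb] Q3 by simp
      then show ?thesis using s h unfolding T3_def s3_def by simp
    qed
  next
    fix T assume "T \<in> {T1, T2, T3}"
    then show "T \<in> {T :: ab_string. length T = n \<and> (\<exists>P. is_suffix_array T P \<and> arith_prog_perm n k P)}"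
      using SA1 SA2 SA3 Q1 Q2 Q3 len1 len2 len3 by blast
  qed
  have t1n: "T1 ! (n - 1) = False" using A1.mkT_at[of 0 s1] Q1 n3 c1 unfolding T1_def s1_def by simp
  have t2n: "T2 ! (n - 1) = True" using A2.mkT_at[of s2 s2] c2 unfolding T2_def by simp
  have t3n: "T3 ! (n - 1) = True" using A3.mkT_at[of s3 s3] c3 unfolding T3_def by simp
  have q2l: "Q2!(n-1) = 1" using A2.last_val Q2 by simp
  have "s2 \<le> n - 1" using c2 by arith
  then have t20: "T2 ! 0 = True" using A2.mkT_at[of "n-1" s2] q2l c2 n3 unfolding T2_def by simp
  have t30: "T3 ! 0 = False" using A3.mkT_at[of 0 s3] Q3 c3 n3 unfolding T3_def by simp
  have dist: "distinct [T1, T2, T3]" using t1n t2n t3n t20 t30 by auto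
  have form: "(\<forall>i\<in>{1..n}. mkT n Q s ! (i - 1) = (if i \<in> set (take s Q) then letter_a else letter_b))"
    for Q s using mkT_nth[of _ n Q s] by simp
  have sf1: "sa_form n T1 n (n - k - 1)"
    unfolding sa_form_def T1_def using A1.sa_mkT[OF C1] form c1 Q1 by (intro exI[of _ Q1] exI[of _ s1]) auto
  have sf2: "sa_form n T2 (k + 1) (n - k)"
    unfolding sa_form_def T2_def using A2.sa_mkT[OF C2] form c2 Q2 by (intro exI[of _ Q2] exI[of _ s2]) auto
  have sf3: "sa_form n T3 1 (n - k)"
    unfolding sa_form_def T3_def using A3.sa_mkT[OF C3] form c3 Q3 by (intro exI[of _ Q3] exI[of _ s3]) auto
  have p1: "has_period T1 (n - k)" unfolding T1_def using A1.period[of s1] c1 Q1 kb n3 by simp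
  have p2: "has_period T2 (n - k)" unfolding T2_def using A2.period[of s2] c2 Q2 kb n3 by simp
  have ly: "lyndon T3"
    unfolding lyndon_def
  proof (intro conjI ballI)
    show "T3 \<noteq> []" using len3 n3 by auto
    fix j assume j: "j \<in> {1..<length T3}"
    have rot: "rotate j T3 = drop j T3 @ take j T3" using rotate_drop_take[of j T3] j by simp
    have x: "j + 1 \<in> {1..n}" using j len3 by auto
    note m = A3.ix_in[OF x]
    have m0: "A3.ix (j+1) \<noteq> 0"
    proof
      assume "A3.ix (j+1) = 0" then show False using m Q3 j by simp
    qed
    have "ord_class.lexordp (suf T3 (Q3!0)) (suf T3 (Q3!(A3.ix (j+1))))"
      using sa_sorted[OF SA3, of 0 "A3.ix (j+1)"] m m0 len3 by simp
    then have "ord_class.lexordp T3 (drop j T3)" using m Q3 unfolding suf_def by simp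
    then have "ord_class.lexordp T3 (drop j T3 @ take j T3)"
      by (rule lex_app) (use j in auto)
    then show "ord_class.lexordp T3 (rotate j T3)" using rot by simp
  qed
  show ?thesis
    using dist seteq sf1 sf2 sf3 p1 p2 ly by blast
qed

end
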